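(* Let $T<\infty$ (so $\mathbb{T}=\{0,1,\dots,T\}$), and recall $G_t=\Delta$ on $D_t^c$. Define processes $(V_t)_{t\le T}$ (value process) and $(S_t)_{t\le T}$ (survival process) by backward recursion: $V_T=G_T$, $S_T=1_{D_T}$, and for $t=T-1,\dots,0$, \[ J_t=\frac{E[S_{t+1}V_{t+1}\mid\mathcal{F}_t]}{E[S_{t+1}\mid\mathcal{F}_t]}\quad\text{on } \{t<T_e\}, \] \[ \begin{cases} V_t=G_t,\ S_t=1 & \text{on } \{t<T_e\}\cap\{G_t\ge J_t\},\\ V_t=J_t,\ S_t=E[S_{t+1}\mid\mathcal{F}_t] & \text{on } \{t<T_e\}\cap\{G_t<J_t\},\\ V_t=G_t,\ S_t=1_{D_t} & \text{on } \{t\ge T_e\}. \end{cases} \] Then $\theta_t:=1_{\{G_t\ge V_t\}}$, $t\le T$, is the unique equilibrium with preference for early stopping.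
   Context: Let $T\in\mathbb{N}$ and $\mathbb{T}=\{0,1,\dots,T\}$. Let $(\Omega,\mathcal{F},P)$ be a probability space with a filtration $(\mathcal{F}_t)_{t\le T}$, $\mathcal{F}_0$ trivial. Let $\sigma$ be a stopping time with values in $\{0,1,2,\dots\}\cup\{\infty\}$ and $P(\sigma>0)=1$; set $D_t=\{t<\sigma\}$. Let $G=(G_t)_{t\le T}$ be an adapted payoff process; on $D_t^c$ one sets $G_t=\Delta$, an auxiliary symbol with the convention $0\cdot\Delta=0$. Standing assumption: $E[\sup_{t\le T}|G_t|1_{D_t}]<\infty$. For $s,t\in[0,\infty]$ write $s\lhd t$ iff $s<t$ or $t=\infty$. Convention: $\inf\emptyset=\infty$. The effective horizon is the random time $T_e=T\wedge\inf\{0\le t<T: P(D_{t+1}\mid\mathcal{F}_t)=0\}$. A stopping policy is a $\{0,1\}$-valued adapted process $\theta=(\theta_t)_{t\in\mathbb{T}}$, and $\mathcal{L}_t\theta=\inf\{s>t:\theta_s=1\}$. $\theta$ is admissible if $P(\mathcal{L}_t\theta\lhd\sigma\mid\mathcal{F}_t)>0$ on $\{t<T_e\}$ and $\theta_t=1$ on $\{t\ge T_e\}$. For admissible $\theta$, on $\{t<T_e\}$ the continuation value is $J_t(\theta)=E[G_{\mathcal{L}_t\theta}1_{\{\mathcal{L}_t\theta\lhd\sigma\}}\mid\mathcal{F}_t]/P(\mathcal{L}_t\theta\lhd\sigma\mid\mathcal{F}_t)$. Define $\Phi(\theta)_t=1$ on $\{t<T_e, G_t>J_t(\theta)\}$,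 $\Phi(\theta)_t=\theta_t$ on $\{t<T_e,G_t=J_t(\theta)\}$, $\Phi(\theta)_t=0$ on $\{t<T_e,G_t<J_t(\theta)\}$, $\Phi(\theta)_t=1$ on $\{t\ge T_e\}$. An equilibrium is an admissible $\theta$ with $\Phi(\theta)=\theta$; it is an equilibrium with preference for early stopping if in addition $\theta_t=1$ on $\{t<T_e, G_t=J_t(\theta)\}$ (i.e., $\theta_t=1$ exactly on $\{t\ge T_e\}\cup\{t<T_e,G_t\ge J_t(\theta)\}$). *)

theory Defs
  imports "HOL-Probability.Probability" "HOL-Library.Extended_Nat"
begin

text \<open>Conventions: time horizon T :: nat, time index set {0..T}; sigma :: 'a => enat
  (values in {0,1,2,...} union {infinity}); the payoff G :: nat => 'a => real, where the
  auxiliary symbol Delta is modelled by an arbitrary (junk) real value outside D t.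
  Conditional expectations are the library's fixed version real_cond_exp; all equalities
  of random variables and all statements "on an event" are understood almost surely.\<close>

definition lhd :: "enat \<Rightarrow> enat \<Rightarrow> bool" where
  "lhd s t \<longleftrightarrow> s < t \<or> t = \<infinity>"

definition Dset :: "'a measure \<Rightarrow> ('a \<Rightarrow> enat) \<Rightarrow> nat \<Rightarrow> 'a set" where
  "Dset M \<sigma> t = {\<omega> \<in> space M. enat t < \<sigma> \<omega>}"

definition cprob :: "'a measure \<Rightarrow> (nat \<Rightarrow> 'a measure) \<Rightarrow> nat \<Rightarrow> 'a set \<Rightarrow> 'a \<Rightarrow> real" where
  "cprob M F t A = real_cond_exp M (F t) (indicator A)"

definition Te :: "'a measure \<Rightarrow> (nat \<Rightarrow> 'a measure) \<Rightarrow> ('a \<Rightarrow> enat) \<Rightarrow> nat \<Rightarrow> 'a \<Rightarrow> nat" where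
  "Te M F \<sigma> T \<omega> =
     (if \<exists>t<T. cprob M F t (Dset M \<sigma> (Suc t)) \<omega> = 0
      then (LEAST t. t < T \<and> cprob M F t (Dset M \<sigma> (Suc t)) \<omega> = 0) else T)"

definition Lop :: "nat \<Rightarrow> (nat \<Rightarrow> 'a \<Rightarrow> bool) \<Rightarrow> nat \<Rightarrow> 'a \<Rightarrow> enat" where
  "Lop T \<theta> t \<omega> =
     (if \<exists>s. t < s \<and> s \<le> T \<and> \<theta> s \<omega> then enat (LEAST s. t < s \<and> s \<le> T \<and> \<theta> s \<omega>) else \<infinity>)"

text \<open>G evaluated at a random time; the value at infinity is irrelevant (it is always
  multiplied by an indicator that vanishes a.s.)\<close>
definition Gat :: "(nat \<Rightarrow> 'a \<Rightarrow> real) \<Rightarrow> enat \<Rightarrow> 'a \<Rightarrow> real" where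
  "Gat G L \<omega> = (case L of enat n \<Rightarrow> G n \<omega> | \<infinity> \<Rightarrow> 0)"

definition survive_set :: "'a measure \<Rightarrow> ('a \<Rightarrow> enat) \<Rightarrow> nat \<Rightarrow> (nat \<Rightarrow> 'a \<Rightarrow> bool) \<Rightarrow> nat \<Rightarrow> 'a set" where
  "survive_set M \<sigma> T \<theta> t = {\<omega> \<in> space M. lhd (Lop T \<theta> t \<omega>) (\<sigma> \<omega>)}"

definition Jcont :: "'a measure \<Rightarrow> (nat \<Rightarrow> 'a measure) \<Rightarrow> ('a \<Rightarrow> enat) \<Rightarrow> (nat \<Rightarrow> 'a \<Rightarrow> real)
    \<Rightarrow> nat \<Rightarrow> (nat \<Rightarrow> 'a \<Rightarrow> bool) \<Rightarrow> nat \<Rightarrow> 'a \<Rightarrow> real" where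
  "Jcont M F \<sigma> G T \<theta> t \<omega> =
     real_cond_exp M (F t)
       (\<lambda>\<omega>'. Gat G (Lop T \<theta> t \<omega>') \<omega>' * indicator (survive_set M \<sigma> T \<theta> t) \<omega>') \<omega>
     / cprob M F t (survive_set M \<sigma> T \<theta> t) \<omega>"

definition admissible :: "'a measure \<Rightarrow> (nat \<Rightarrow> 'a measure) \<Rightarrow> ('a \<Rightarrow> enat) \<Rightarrow> nat
    \<Rightarrow> (nat \<Rightarrow> 'a \<Rightarrow> bool) \<Rightarrow> bool" where
  "admissible M F \<sigma> T \<theta> \<longleftrightarrow>
     (\<forall>t\<le>T. \<theta> t \<in> measurable (F t) (count_space UNIV)) \<and>
     (\<forall>t\<le>T. AE \<omega> in M. t < Te M F \<sigma> T \<omega> \<longrightarrow> cprob M F t (survive_set M \<sigma> T \<theta> t) \<omega> > 0) \<and>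
     (\<forall>t\<le>T. AE \<omega> in M. Te M F \<sigma> T \<omega> \<le> t \<longrightarrow> \<theta> t \<omega>)"

definition Phi :: "'a measure \<Rightarrow> (nat \<Rightarrow> 'a measure) \<Rightarrow> ('a \<Rightarrow> enat) \<Rightarrow> (nat \<Rightarrow> 'a \<Rightarrow> real)
    \<Rightarrow> nat \<Rightarrow> (nat \<Rightarrow> 'a \<Rightarrow> bool) \<Rightarrow> nat \<Rightarrow> 'a \<Rightarrow> bool" where
  "Phi M F \<sigma> G T \<theta> t \<omega> =
     (if t < Te M F \<sigma> T \<omega> then
        (if G t \<omega> > Jcont M F \<sigma> G T \<theta> t \<omega> then True
         else if G t \<omega> = Jcont M F \<sigma> G T \<theta> t \<omega> then \<theta> t \<omega>
         else False)
      else True)"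

definition equilibrium :: "'a measure \<Rightarrow> (nat \<Rightarrow> 'a measure) \<Rightarrow> ('a \<Rightarrow> enat) \<Rightarrow> (nat \<Rightarrow> 'a \<Rightarrow> real)
    \<Rightarrow> nat \<Rightarrow> (nat \<Rightarrow> 'a \<Rightarrow> bool) \<Rightarrow> bool" where
  "equilibrium M F \<sigma> G T \<theta> \<longleftrightarrow>
     admissible M F \<sigma> T \<theta> \<and> (\<forall>t\<le>T. AE \<omega> in M. Phi M F \<sigma> G T \<theta> t \<omega> = \<theta> t \<omega>)"

definition equilibrium_early :: "'a measure \<Rightarrow> (nat \<Rightarrow> 'a measure) \<Rightarrow> ('a \<Rightarrow> enat) \<Rightarrow> (nat \<Rightarrow> 'a \<Rightarrow> real)
    \<Rightarrow> nat \<Rightarrow> (nat \<Rightarrow> 'a \<Rightarrow> bool) \<Rightarrow> bool" where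
  "equilibrium_early M F \<sigma> G T \<theta> \<longleftrightarrow>
     equilibrium M F \<sigma> G T \<theta> \<and>
     (\<forall>t\<le>T. AE \<omega> in M. t < Te M F \<sigma> T \<omega> \<and> G t \<omega> = Jcont M F \<sigma> G T \<theta> t \<omega> \<longrightarrow> \<theta> t \<omega>)"

text \<open>Backward recursion for (V_t, S_t): VSrec n gives (V_(T-n), S_(T-n)) for n <= T.\<close>
primrec VSrec :: "'a measure \<Rightarrow> (nat \<Rightarrow> 'a measure) \<Rightarrow> ('a \<Rightarrow> enat) \<Rightarrow> (nat \<Rightarrow> 'a \<Rightarrow> real)
    \<Rightarrow> nat \<Rightarrow> nat \<Rightarrow> ('a \<Rightarrow> real) \<times> ('a \<Rightarrow> real)" where
  "VSrec M F \<sigma> G T 0 = (G T, indicator (Dset M \<sigma> T))"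
| "VSrec M F \<sigma> G T (Suc n) =
     (let t = T - Suc n; V' = fst (VSrec M F \<sigma> G T n); S' = snd (VSrec M F \<sigma> G T n);
          ES = real_cond_exp M (F t) S';
          J = (\<lambda>\<omega>. real_cond_exp M (F t) (\<lambda>\<omega>'. S' \<omega>' * V' \<omega>') \<omega> / ES \<omega>)
      in ((\<lambda>\<omega>. if t < Te M F \<sigma> T \<omega> then (if G t \<omega> \<ge> J \<omega> then G t \<omega> else J \<omega>) else G t \<omega>),
          (\<lambda>\<omega>. if t < Te M F \<sigma> T \<omega> then (if G t \<omega> \<ge> J \<omega> then 1 else ES \<omega>)
                else indicator (Dset M \<sigma> t) \<omega>)))"

definition Vproc :: "'a measure \<Rightarrow> (nat \<Rightarrow> 'a measure) \<Rightarrow> ('a \<Rightarrow> enat) \<Rightarrow> (nat \<Rightarrow> 'a \<Rightarrow> real)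
    \<Rightarrow> nat \<Rightarrow> nat \<Rightarrow> 'a \<Rightarrow> real" where
  "Vproc M F \<sigma> G T t = fst (VSrec M F \<sigma> G T (T - t))"

definition Sproc :: "'a measure \<Rightarrow> (nat \<Rightarrow> 'a measure) \<Rightarrow> ('a \<Rightarrow> enat) \<Rightarrow> (nat \<Rightarrow> 'a \<Rightarrow> real)
    \<Rightarrow> nat \<Rightarrow> nat \<Rightarrow> 'a \<Rightarrow> real" where
  "Sproc M F \<sigma> G T t = snd (VSrec M F \<sigma> G T (T - t))"

end

theory Submission
  imports Defs
begin

locale stsetup = prob_space M for M :: "'a measure" +
  fixes F :: "nat \<Rightarrow> 'a measure" and \<sigma> :: "'a \<Rightarrow> enat" and G :: "nat \<Rightarrow> 'a \<Rightarrow> real" and T :: nat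
  assumes subalg: "\<And>t. t \<le> T \<Longrightarrow> subalgebra M (F t)"
  and filt: "\<And>s t. s \<le> t \<Longrightarrow> t \<le> T \<Longrightarrow> sets (F s) \<subseteq> sets (F t)"
  and sig_meas: "\<sigma> \<in> measurable M (count_space UNIV)"
  and stop: "\<And>t. t \<le> T \<Longrightarrow> {\<omega> \<in> space M. \<sigma> \<omega> \<le> enat t} \<in> sets (F t)"
  and Gmeas: "\<And>t. t \<le> T \<Longrightarrow> G t \<in> borel_measurable (F t)"
  and Gint: "integrable M (\<lambda>\<omega>. Max ((\<lambda>t. \<bar>G t \<omega>\<bar> * indicator (Dset M \<sigma> t) \<omega>) ` {..T}))"
begin

abbreviation "D t \<equiv> Dset M \<sigma> t"
abbreviation "TE \<omega> \<equiv> Te M F \<sigma> T \<omega>"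
abbreviation "V \<equiv> Vproc M F \<sigma> G T"
abbreviation "S \<equiv> Sproc M F \<sigma> G T"
abbreviation "CE t f \<equiv> real_cond_exp M (F t) f"
abbreviation "Gmax \<equiv> (\<lambda>\<omega>. Max ((\<lambda>t. \<bar>G t \<omega>\<bar> * indicator (Dset M \<sigma> t) \<omega>) ` {..T}))"
abbreviation "J t \<omega> \<equiv> CE t (\<lambda>\<omega>. S (Suc t) \<omega> * V (Suc t) \<omega>) \<omega> / CE t (S (Suc t)) \<omega>"
abbreviation "th \<equiv> (\<lambda>t \<omega>. G t \<omega> \<ge> V t \<omega>)"

lemma sfs: "t \<le> T \<Longrightarrow> sigma_finite_subalgebra M (F t)"
  using finite_measure_subalgebra_is_sigma_finite[of M "F t"] subalg[of t] finite_measure_axioms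
  by (simp add: finite_measure_subalgebra_def finite_measure_subalgebra_axioms_def)

lemma subalg2: "s \<le> t \<Longrightarrow> t \<le> T \<Longrightarrow> subalgebra (F t) (F s)"
  using subalg[of s] subalg[of t] filt[of s t] by (auto simp: subalgebra_def)

lemma measM: "t \<le> T \<Longrightarrow> f \<in> measurable (F t) N \<Longrightarrow> f \<in> measurable M N"
  using measurable_from_subalg subalg by blast

lemma measF: "s \<le> t \<Longrightarrow> t \<le> T \<Longrightarrow> f \<in> measurable (F s) N \<Longrightarrow> f \<in> measurable (F t) N"
  using measurable_from_subalg subalg2 by blast

lemma spaceF: "t \<le> T \<Longrightarrow> space (F t) = space M"
  using subalg by (auto simp: subalgebra_def)

lemma setsF: "t \<le> T \<Longrightarrow> A \<in> sets (F t) \<Longrightarrow> A \<in> sets M"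
  using subalg by (auto simp: subalgebra_def)

lemma D_M: "D t \<in> sets M"
proof -
  have [measurable]: "\<sigma> \<in> measurable M (count_space UNIV)" by (rule sig_meas)
  show ?thesis unfolding Dset_def by measurable
qed

lemma D_F: "t \<le> T \<Longrightarrow> D t \<in> sets (F t)"
proof -
  assume t: "t \<le> T"
  have "D t = space (F t) - {\<omega> \<in> space M. \<sigma> \<omega> \<le> enat t}"
    using spaceF[OF t] by (auto simp: Dset_def not_le)
  then show ?thesis using stop[OF t] by auto
qed

lemma D_sub: "D t \<subseteq> space M" by (auto simp: Dset_def)

lemma D_mono: "s \<le> t \<Longrightarrow> D t \<subseteq> D s"
  by (auto simp: Dset_def) (meson enat_ord_simps(1) le_less_trans)

lemma Te_le: "TE \<omega> \<le> T"
  unfolding Te_def by (auto intro: Least_le[THEN order_trans] dest: LeastI_ex)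

lemma Te_gt: "t < TE \<omega> \<longleftrightarrow> t < T \<and> (\<forall>s\<le>t. cprob M F s (D (Suc s)) \<omega> \<noteq> 0)"
proof (cases "\<exists>t<T. cprob M F t (D (Suc t)) \<omega> = 0")
  case True
  define m where "m = (LEAST t. t < T \<and> cprob M F t (D (Suc t)) \<omega> = 0)"
  have m: "m < T" "cprob M F m (D (Suc m)) \<omega> = 0"
    using LeastI_ex[OF True] unfolding m_def by auto
  have ml: "\<And>s. s < T \<Longrightarrow> cprob M F s (D (Suc s)) \<omega> = 0 \<Longrightarrow> m \<le> s"
    unfolding m_def by (rule Least_le) auto
  have "TE \<omega> = m" using True unfolding Te_def m_def by simp
  then show ?thesis using m ml
    by (metis le_trans less_le_not_le not_le_imp_less)
next
  case False
  then have "TE \<omega> = T" unfolding Te_def by (simp only: if_False)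
  then show ?thesis using False by auto
qed

lemma int_bdd: "f \<in> borel_measurable M \<Longrightarrow> (\<And>\<omega>. \<bar>f \<omega>\<bar> \<le> B) \<Longrightarrow> integrable M (f :: 'a \<Rightarrow> real)"
  by (rule integrable_const_bound[where B=B]) auto

lemma cprob_meas: "s \<le> t \<Longrightarrow> t \<le> T \<Longrightarrow> cprob M F s A \<in> borel_measurable (F t)"
  unfolding cprob_def by (rule measF) auto

lemma Te_F: "t \<le> T \<Longrightarrow> Measurable.pred (F t) (\<lambda>\<omega>. t < TE \<omega>)"
proof -
  assume t: "t \<le> T"
  have eq: "(\<lambda>\<omega>. t < TE \<omega>) = (\<lambda>\<omega>. t < T \<and> (\<forall>s\<in>{..t}. cprob M F s (D (Suc s)) \<omega> \<noteq> 0))"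
    by (auto simp: Te_gt)
  have "Measurable.pred (F t) (\<lambda>\<omega>. \<forall>s\<in>{..t}. cprob M F s (D (Suc s)) \<omega> \<noteq> 0)"
  proof (rule pred_intros_finite(3))
    fix s assume "s \<in> {..t}"
    then have [measurable]: "cprob M F s (D (Suc s)) \<in> borel_measurable (F t)"
      using cprob_meas t by auto
    show "Measurable.pred (F t) (\<lambda>\<omega>. cprob M F s (D (Suc s)) \<omega> \<noteq> 0)" by measurable
  qed auto
  then show ?thesis unfolding eq by (cases "t < T") auto
qed

lemma Te_Fset: "t \<le> T \<Longrightarrow> {\<omega> \<in> space M. t < TE \<omega>} \<in> sets (F t)"
  using Te_F[unfolded pred_def] spaceF by auto

lemma Te_D: "t < T \<Longrightarrow> AE \<omega> in M. t < TE \<omega> \<longrightarrow> \<omega> \<in> D t"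
proof -
  assume t: "t < T"
  interpret sf: sigma_finite_subalgebra M "F t" using sfs t by simp
  have [measurable]: "indicator (D t) \<in> borel_measurable (F t)" using D_F t by simp
  have [measurable]: "D (Suc t) \<in> sets M" by (rule D_M)
  have "AE \<omega> in M. CE t (\<lambda>\<omega>. indicator (D t) \<omega> * indicator (D (Suc t)) \<omega>) \<omega>
     = indicator (D t) \<omega> * CE t (indicator (D (Suc t))) \<omega>"
  proof (rule sf.real_cond_exp_mult)
    show "indicator (D t) \<in> borel_measurable (F t)" using D_F t by simp
    show "random_variable borel (\<lambda>\<omega>. indicator (D (Suc t)) \<omega> :: real)" by simp
    show "integrable M (\<lambda>\<omega>. indicator (D t) \<omega> * indicator (D (Suc t)) \<omega> :: real)"
      apply (rule int_bdd[where B=1])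
      apply (intro borel_measurable_times borel_measurable_indicator D_M)
      by (auto simp: indicator_def)
  qed
  moreover have "(\<lambda>\<omega>. indicator (D t) \<omega> * indicator (D (Suc t)) \<omega>) = (indicator (D (Suc t)) :: 'a \<Rightarrow> real)"
    using D_mono[of t "Suc t"] by (auto simp: indicator_def fun_eq_iff)
  ultimately have "AE \<omega> in M. cprob M F t (D (Suc t)) \<omega> = indicator (D t) \<omega> * cprob M F t (D (Suc t)) \<omega>"
    unfolding cprob_def by simp
  then show ?thesis
    by eventually_elim (auto simp: Te_gt indicator_def)
qed

lemma V_T: "V T = G T" and S_T: "S T = indicator (D T)"
  unfolding Vproc_def Sproc_def by simp_all

lemma VS_step:
  assumes t: "t < T"
  shows "V t = (\<lambda>\<omega>. if t < TE \<omega> then (if G t \<omega> \<ge> J t \<omega> then G t \<omega> else J t \<omega>) else G t \<omega>)"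
    and "S t = (\<lambda>\<omega>. if t < TE \<omega> then (if G t \<omega> \<ge> J t \<omega> then 1 else CE t (S (Suc t)) \<omega>)
                else indicator (D t) \<omega>)"
proof -
  have e1: "T - t = Suc (T - Suc t)" and e2: "T - Suc (T - Suc t) = t" using t by simp_all
  have e3: "fst (VSrec M F \<sigma> G T (T - Suc t)) = V (Suc t)" "snd (VSrec M F \<sigma> G T (T - Suc t)) = S (Suc t)"
    by (simp_all add: Vproc_def Sproc_def)
  show "V t = (\<lambda>\<omega>. if t < TE \<omega> then (if G t \<omega> \<ge> J t \<omega> then G t \<omega> else J t \<omega>) else G t \<omega>)"
  proof -
    have "V t = fst (VSrec M F \<sigma> G T (Suc (T - Suc t)))" by (simp only: Vproc_def e1)
    also have "\<dots> = (\<lambda>\<omega>. if t < TE \<omega> then (if G t \<omega> \<ge> J t \<omega> then G t \<omega> else J t \<omega>) else G t \<omega>)"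
      by (simp only: VSrec.simps Let_def e2 e3 fst_conv snd_conv)
    finally show ?thesis .
  qed
  show "S t = (\<lambda>\<omega>. if t < TE \<omega> then (if G t \<omega> \<ge> J t \<omega> then 1 else CE t (S (Suc t)) \<omega>)
                else indicator (D t) \<omega>)"
  proof -
    have "S t = snd (VSrec M F \<sigma> G T (Suc (T - Suc t)))" by (simp only: Sproc_def e1)
    also have "\<dots> = (\<lambda>\<omega>. if t < TE \<omega> then (if G t \<omega> \<ge> J t \<omega> then 1 else CE t (S (Suc t)) \<omega>)
                else indicator (D t) \<omega>)"
      by (simp only: VSrec.simps Let_def e2 e3 fst_conv snd_conv)
    finally show ?thesis .
  qed
qed

lemma VS_meas:
  assumes t: "t \<le> T"
  shows "V t \<in> borel_measurable (F t)" "S t \<in> borel_measurable (F t)"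
proof -
  have [measurable]: "G t \<in> borel_measurable (F t)" using Gmeas t by simp
  have [measurable]: "Measurable.pred (F t) (\<lambda>\<omega>. t < TE \<omega>)" using Te_F t by simp
  have [measurable]: "D t \<in> sets (F t)" using D_F t by simp
  show "V t \<in> borel_measurable (F t)"
  proof (cases "t < T")
    case True
    show ?thesis unfolding VS_step(1)[OF True] by measurable
  next
    case False
    then show ?thesis using t V_T Gmeas[of T] by auto
  qed
  show "S t \<in> borel_measurable (F t)"
  proof (cases "t < T")
    case True
    show ?thesis unfolding VS_step(2)[OF True] by measurable
  next
    case False
    then show ?thesis using t S_T D_F[of T] by auto
  qed
qed

lemma VS_measM: "t \<le> T \<Longrightarrow> V t \<in> borel_measurable M" "t \<le> T \<Longrightarrow> S t \<in> borel_measurable M"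
  using VS_meas measM by blast+

lemma th_meas: "t \<le> T \<Longrightarrow> Measurable.pred (F t) (th t)"
proof -
  assume t: "t \<le> T"
  show ?thesis
    using borel_measurable_le[OF VS_meas(1)[OF t] Gmeas[OF t]] unfolding pred_def by simp
qed

lemma th_T: "th T \<omega>" using V_T by simp

lemma th_step: assumes t: "t < T" shows "th t \<omega> \<longleftrightarrow> (\<not> t < TE \<omega> \<or> G t \<omega> \<ge> J t \<omega>)"
  by (auto simp: VS_step(1)[OF t])

lemma th_ge_Te: assumes "t \<le> T" "TE \<omega> \<le> t" shows "th t \<omega>"
proof (cases "t < T")
  case True
  have "\<not> t < TE \<omega>" using assms(2) by simp
  then show ?thesis using th_step[OF True] by blast
next
  case False
  then show ?thesis using assms th_T by auto
qed


definition tau :: "nat \<Rightarrow> 'a \<Rightarrow> nat" where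
  "tau t \<omega> = (LEAST s. t \<le> s \<and> s \<le> T \<and> th s \<omega>)"

definition X :: "nat \<Rightarrow> 'a \<Rightarrow> real" where
  "X t \<omega> = G (tau t \<omega>) \<omega> * indicator (D (tau t \<omega>)) \<omega>"

definition Y :: "nat \<Rightarrow> 'a \<Rightarrow> real" where
  "Y t \<omega> = indicator (D (tau t \<omega>)) \<omega>"

lemma tau_props: assumes "t \<le> T" shows "t \<le> tau t \<omega>" "tau t \<omega> \<le> T" "th (tau t \<omega>) \<omega>"
proof -
  have "t \<le> T \<and> T \<le> T \<and> th T \<omega>" using assms th_T by simp
  then have "t \<le> tau t \<omega> \<and> tau t \<omega> \<le> T \<and> th (tau t \<omega>) \<omega>"
    unfolding tau_def by (rule LeastI)
  then show "t \<le> tau t \<omega>" "tau t \<omega> \<le> T" "th (tau t \<omega>) \<omega>" by auto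
qed

lemma tau_T: "tau T \<omega> = T"
  using tau_props[of T \<omega>] by simp

lemma tau_step: assumes t: "t < T" shows "tau t \<omega> = (if th t \<omega> then t else tau (Suc t) \<omega>)"
proof (cases "th t \<omega>")
  case True
  then have "tau t \<omega> = t" unfolding tau_def using t by (intro Least_equality) auto
  then show ?thesis using True by simp
next
  case False
  have "(\<lambda>s. t \<le> s \<and> s \<le> T \<and> th s \<omega>) = (\<lambda>s. Suc t \<le> s \<and> s \<le> T \<and> th s \<omega>)"
    using False by (auto simp: fun_eq_iff le_Suc_eq le_less)
  then show ?thesis using False unfolding tau_def by simp
qed

lemma Lop_th: assumes t: "t < T" shows "Lop T th t \<omega> = enat (tau (Suc t) \<omega>)"
proof -
  have ex: "\<exists>s. t < s \<and> s \<le> T \<and> th s \<omega>" using t th_T by auto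
  have "(\<lambda>s. t < s \<and> s \<le> T \<and> th s \<omega>) = (\<lambda>s. Suc t \<le> s \<and> s \<le> T \<and> th s \<omega>)"
    by (auto simp: fun_eq_iff Suc_le_eq)
  then show ?thesis using ex unfolding Lop_def tau_def by simp
qed

lemma XY_T: "X T = (\<lambda>\<omega>. G T \<omega> * indicator (D T) \<omega>)" "Y T = indicator (D T)"
  by (auto simp: X_def Y_def tau_T fun_eq_iff)

abbreviation "ath t \<omega> \<equiv> (if th t \<omega> then 1 else 0 :: real)"

lemma XY_step: assumes t: "t < T"
  shows "X t = (\<lambda>\<omega>. ath t \<omega> * (G t \<omega> * indicator (D t) \<omega>) + (1 - ath t \<omega>) * X (Suc t) \<omega>)"
    "Y t = (\<lambda>\<omega>. ath t \<omega> * indicator (D t) \<omega> + (1 - ath t \<omega>) * Y (Suc t) \<omega>)"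
  by (auto simp: X_def Y_def tau_step[OF t] fun_eq_iff)

lemma ath_meas: "t \<le> T \<Longrightarrow> ath t \<in> borel_measurable (F t)"
proof -
  assume t: "t \<le> T"
  have [measurable]: "Measurable.pred (F t) (th t)" using th_meas[OF t] .
  show ?thesis by measurable
qed

lemma GD_meas: "t \<le> T \<Longrightarrow> (\<lambda>\<omega>. G t \<omega> * indicator (D t) \<omega>) \<in> borel_measurable (F t)"
proof -
  assume t: "t \<le> T"
  have [measurable]: "G t \<in> borel_measurable (F t)" "D t \<in> sets (F t)" using Gmeas[OF t] D_F[OF t] by auto
  show ?thesis by measurable
qed

lemma XY_meas: assumes "t \<le> T" shows "X t \<in> borel_measurable M \<and> Y t \<in> borel_measurable M"
  using assms
proof (induction rule: inc_induct)
  case base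
  have [measurable]: "G T \<in> borel_measurable M" using Gmeas[of T] measM by blast
  have [measurable]: "D T \<in> sets M" by (rule D_M)
  show ?case unfolding XY_T by measurable
next
  case (step n)
  have [measurable]: "X (Suc n) \<in> borel_measurable M" "Y (Suc n) \<in> borel_measurable M" using step.IH by auto
  have [measurable]: "ath n \<in> borel_measurable M" using measM[of n "ath n" borel] ath_meas[of n] step.hyps by simp
  have [measurable]: "(\<lambda>\<omega>. G n \<omega> * indicator (D n) \<omega>) \<in> borel_measurable M"
    using measM[of n _ borel] GD_meas[of n] step.hyps by simp
  have [measurable]: "D n \<in> sets M" by (rule D_M)
  show ?case unfolding XY_step[OF step.hyps(2)] by measurable
qed

lemma Gmax_bound: "s \<le> T \<Longrightarrow> norm (G s \<omega> * indicator (D s) \<omega>) \<le> norm (Gmax \<omega>)"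
proof -
  assume s: "s \<le> T"
  have "norm (G s \<omega> * indicator (D s) \<omega>) = \<bar>G s \<omega>\<bar> * indicator (D s) \<omega>" by (simp add: abs_mult)
  also have "\<dots> \<le> Gmax \<omega>" using s by (intro Max_ge) auto
  also have "\<dots> \<le> norm (Gmax \<omega>)" by (simp only: real_norm_def abs_ge_self)
  finally show ?thesis .
qed

lemma GD_int: assumes t: "t \<le> T" shows "integrable M (\<lambda>\<omega>. G t \<omega> * indicator (D t) \<omega>)"
proof (rule Bochner_Integration.integrable_bound[OF Gint])
  show "(\<lambda>\<omega>. G t \<omega> * indicator (D t) \<omega>) \<in> borel_measurable M" using measM[OF t GD_meas[OF t]] .
  show "AE \<omega> in M. norm (G t \<omega> * indicator (D t) \<omega>) \<le> norm (Gmax \<omega>)"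
    by (intro AE_I2 Gmax_bound t)
qed

lemma X_int: assumes t: "t \<le> T" shows "integrable M (X t)"
proof (rule Bochner_Integration.integrable_bound[OF Gint])
  show "X t \<in> borel_measurable M" using XY_meas[OF t] by simp
  show "AE \<omega> in M. norm (X t \<omega>) \<le> norm (Gmax \<omega>)"
    unfolding X_def by (intro AE_I2 Gmax_bound tau_props t)
qed

lemma Y_int: "t \<le> T \<Longrightarrow> integrable M (Y t)"
  by (rule int_bdd[where B=1]) (auto simp: Y_def dest: XY_meas[THEN conjunct2])


lemma int_ind: "A \<in> sets M \<Longrightarrow> integrable M f \<Longrightarrow> integrable M (\<lambda>x. indicator A x * f x :: real)"
  using integrable_real_mult_indicator[of A M f] by (simp add: mult_ac)

lemma pos_lemma:
  assumes t: "t \<le> T" and Zi: "integrable M Z" and Z0: "AE \<omega> in M. Z \<omega> \<ge> 0"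
    and ZA: "AE \<omega> in M. \<omega> \<in> A \<longrightarrow> Z \<omega> > 0" and A: "A \<in> sets M"
  shows "AE \<omega> in M. CE t (indicator A) \<omega> > 0 \<longrightarrow> CE t Z \<omega> > 0"
proof -
  interpret sf: sigma_finite_subalgebra M "F t" using sfs t by simp
  have Zm[measurable]: "Z \<in> borel_measurable M" using Zi by simp
  have [measurable]: "A \<in> sets M" by (rule A)
  have Ai: "integrable M (indicator A :: 'a \<Rightarrow> real)"
    using A by (intro int_bdd[where B=1] borel_measurable_indicator) (auto simp: indicator_def)
  define B where "B = {\<omega> \<in> space M. CE t Z \<omega> \<le> 0 \<and> CE t (indicator A) \<omega> > 0}"
  have BF: "B \<in> sets (F t)"
  proof -
    have "B = {\<omega> \<in> space (F t). CE t Z \<omega> \<le> 0 \<and> CE t (indicator A) \<omega> > 0}"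
      unfolding B_def using spaceF[OF t] by simp
    also have "\<dots> \<in> sets (F t)" by measurable
    finally show ?thesis .
  qed
  have BM[measurable]: "B \<in> sets M" using setsF[OF t BF] .
  have e1: "(\<integral>\<omega>\<in>B. Z \<omega> \<partial>M) = (\<integral>\<omega>\<in>B. CE t Z \<omega> \<partial>M)"
    by (rule sf.real_cond_exp_intA[OF Zi BF])
  have CZi: "integrable M (CE t Z)" by (rule sf.real_cond_exp_int(1)[OF Zi])
  have "(\<integral>\<omega>\<in>B. CE t Z \<omega> \<partial>M) = (\<integral>\<omega>. indicator B \<omega> * CE t Z \<omega> \<partial>M)"
    unfolding set_lebesgue_integral_def by simp
  also have "\<dots> \<le> (\<integral>\<omega>. 0 \<partial>M)"
  proof (rule integral_mono)
    show "integrable M (\<lambda>\<omega>. indicator B \<omega> * CE t Z \<omega>)"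
      by (rule int_ind[OF BM CZi])
  qed (auto simp: B_def indicator_def)
  finally have le0: "(\<integral>\<omega>. indicator B \<omega> * Z \<omega> \<partial>M) \<le> 0"
    using e1 unfolding set_lebesgue_integral_def by simp
  have iBZ: "integrable M (\<lambda>\<omega>. indicator B \<omega> * Z \<omega>)"
    by (rule int_ind[OF BM Zi])
  have nn: "AE \<omega> in M. 0 \<le> indicator B \<omega> * Z \<omega>" using Z0 by eventually_elim (auto simp: indicator_def)
  have "(\<integral>\<omega>. indicator B \<omega> * Z \<omega> \<partial>M) \<ge> 0" by (rule integral_nonneg_AE[OF nn])
  with le0 have "(\<integral>\<omega>. indicator B \<omega> * Z \<omega> \<partial>M) = 0" by simp
  then have "AE \<omega> in M. indicator B \<omega> * Z \<omega> = 0"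
    using integral_nonneg_eq_0_iff_AE[OF iBZ nn] by simp
  then have BA: "AE \<omega> in M. indicator B \<omega> * indicator A \<omega> = (0::real)"
    using ZA by eventually_elim (auto simp: indicator_def)
  have iBA: "integrable M (\<lambda>\<omega>. indicator B \<omega> * indicator A \<omega> :: real)"
    by (rule int_ind[OF BM Ai])
  have "(\<integral>\<omega>. indicator B \<omega> * indicator A \<omega> \<partial>M) = (0::real)"
    by (rule integral_eq_zero_AE[OF BA])
  then have "(\<integral>\<omega>\<in>B. (indicator A \<omega> :: real) \<partial>M) = 0" unfolding set_lebesgue_integral_def by simp
  then have "(\<integral>\<omega>\<in>B. CE t (indicator A) \<omega> \<partial>M) = 0"
    using sf.real_cond_exp_intA[OF Ai BF] by simp
  then have z: "(\<integral>\<omega>. indicator B \<omega> * CE t (indicator A) \<omega> \<partial>M) = 0"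
    unfolding set_lebesgue_integral_def by simp
  have CAi: "integrable M (CE t (indicator A))" by (rule sf.real_cond_exp_int(1)[OF Ai])
  have iBC: "integrable M (\<lambda>\<omega>. indicator B \<omega> * CE t (indicator A) \<omega>)"
    by (rule int_ind[OF BM CAi])
  have nn2: "AE \<omega> in M. 0 \<le> indicator B \<omega> * CE t (indicator A) \<omega>"
    by (rule AE_I2) (auto simp: B_def indicator_def)
  have "AE \<omega> in M. indicator B \<omega> * CE t (indicator A) \<omega> = 0"
    using integral_nonneg_eq_0_iff_AE[OF iBC nn2] z by simp
  then show ?thesis
  proof (rule AE_mp[OF _ AE_I2], intro impI)
    fix \<omega> assume \<omega>: "\<omega> \<in> space M" and h: "indicator B \<omega> * CE t (indicator A) \<omega> = 0"
      and p: "CE t (indicator A) \<omega> > 0"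
    show "CE t Z \<omega> > 0"
    proof (rule ccontr)
      assume "\<not> CE t Z \<omega> > 0"
      then have "\<omega> \<in> B" using \<omega> p by (simp add: B_def)
      then show False using h p by simp
    qed
  qed
qed


lemma pw:
  assumes n: "n < T"
  shows "n < TE \<omega> \<Longrightarrow> G n \<omega> \<ge> J n \<omega> \<Longrightarrow> th n \<omega> \<and> S n \<omega> = 1 \<and> V n \<omega> = G n \<omega>"
    and "n < TE \<omega> \<Longrightarrow> \<not> G n \<omega> \<ge> J n \<omega> \<Longrightarrow> \<not> th n \<omega> \<and> S n \<omega> = CE n (S (Suc n)) \<omega> \<and> V n \<omega> = J n \<omega>"
    and "\<not> n < TE \<omega> \<Longrightarrow> th n \<omega> \<and> S n \<omega> = indicator (D n) \<omega> \<and> V n \<omega> = G n \<omega>"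
proof -
  have Vn: "V n \<omega> = (if n < TE \<omega> then (if G n \<omega> \<ge> J n \<omega> then G n \<omega> else J n \<omega>) else G n \<omega>)"
    by (simp only: VS_step(1)[OF n])
  have Sn: "S n \<omega> = (if n < TE \<omega> then (if G n \<omega> \<ge> J n \<omega> then 1 else CE n (S (Suc n)) \<omega>) else indicator (D n) \<omega>)"
    by (simp only: VS_step(2)[OF n])
  have thn: "th n \<omega> \<longleftrightarrow> (\<not> n < TE \<omega> \<or> G n \<omega> \<ge> J n \<omega>)" by (rule th_step[OF n])
  show "n < TE \<omega> \<Longrightarrow> G n \<omega> \<ge> J n \<omega> \<Longrightarrow> th n \<omega> \<and> S n \<omega> = 1 \<and> V n \<omega> = G n \<omega>"
    using Vn Sn thn by simp
  show "n < TE \<omega> \<Longrightarrow> \<not> G n \<omega> \<ge> J n \<omega> \<Longrightarrow> \<not> th n \<omega> \<and> S n \<omega> = CE n (S (Suc n)) \<omega> \<and> V n \<omega> = J n \<omega>"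
    using Vn Sn thn by simp
  show "\<not> n < TE \<omega> \<Longrightarrow> th n \<omega> \<and> S n \<omega> = indicator (D n) \<omega> \<and> V n \<omega> = G n \<omega>"
    using Vn Sn thn by simp
qed

lemma main:
  assumes "t \<le> T"
  shows "(AE \<omega> in M. S t \<omega> = CE t (Y t) \<omega>) \<and> (AE \<omega> in M. S t \<omega> * V t \<omega> = CE t (X t) \<omega>)
     \<and> (AE \<omega> in M. (\<omega> \<in> D t \<or> t < TE \<omega>) \<longrightarrow> S t \<omega> > 0)"
  using assms
proof (induction rule: inc_induct)
  case base
  interpret sf: sigma_finite_subalgebra M "F T" using sfs by simp
  have i1: "integrable M (indicator (D T) :: 'a \<Rightarrow> real)" using Y_int[of T] XY_T by simp
  have a1: "AE \<omega> in M. CE T (indicator (D T)) \<omega> = indicator (D T) \<omega>"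
    by (rule sf.real_cond_exp_F_meas[OF i1]) (use D_F[of T] in simp)
  have a2: "AE \<omega> in M. CE T (\<lambda>\<omega>. G T \<omega> * indicator (D T) \<omega>) \<omega> = G T \<omega> * indicator (D T) \<omega>"
    by (rule sf.real_cond_exp_F_meas[OF GD_int GD_meas]) simp_all
  have "AE \<omega> in M. S T \<omega> = CE T (Y T) \<omega>" using a1 unfolding XY_T S_T by eventually_elim simp
  moreover have "AE \<omega> in M. S T \<omega> * V T \<omega> = CE T (X T) \<omega>"
    using a2 unfolding XY_T S_T V_T by eventually_elim (simp add: mult.commute)
  moreover have "AE \<omega> in M. (\<omega> \<in> D T \<or> T < TE \<omega>) \<longrightarrow> S T \<omega> > 0"
  proof (rule AE_I2)
    fix \<omega> show "(\<omega> \<in> D T \<or> T < TE \<omega>) \<longrightarrow> S T \<omega> > 0"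
      using Te_le[of \<omega>] unfolding S_T by (auto simp: indicator_def)
  qed
  ultimately show ?case by blast
next
  case (step n)
  have n: "n < T" using step.hyps by simp
  have nT: "n \<le> T" and sT: "Suc n \<le> T" using n by simp_all
  interpret sf: sigma_finite_subalgebra M "F n" using sfs nT by simp
  interpret sf1: sigma_finite_subalgebra M "F (Suc n)" using sfs sT by simp
  have A1: "AE \<omega> in M. S (Suc n) \<omega> = CE (Suc n) (Y (Suc n)) \<omega>"
    and B1: "AE \<omega> in M. S (Suc n) \<omega> * V (Suc n) \<omega> = CE (Suc n) (X (Suc n)) \<omega>"
    and C1: "AE \<omega> in M. (\<omega> \<in> D (Suc n) \<or> Suc n < TE \<omega>) \<longrightarrow> S (Suc n) \<omega> > 0"
    using step.IH by auto
  have Sm[measurable]: "S (Suc n) \<in> borel_measurable M" and Vm[measurable]: "V (Suc n) \<in> borel_measurable M"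
    using VS_measM[OF sT] by auto
  have SVm: "(\<lambda>\<omega>. S (Suc n) \<omega> * V (Suc n) \<omega>) \<in> borel_measurable M" by measurable
  have Y1m: "Y (Suc n) \<in> borel_measurable M" and X1m: "X (Suc n) \<in> borel_measurable M"
    using XY_meas[OF sT] by auto
  have intS1: "integrable M (S (Suc n))"
    using integrable_cong_AE[OF Sm borel_measurable_cond_exp2 A1] sf1.real_cond_exp_int(1)[OF Y_int[OF sT]]
    by simp
  have intSV1: "integrable M (\<lambda>\<omega>. S (Suc n) \<omega> * V (Suc n) \<omega>)"
    using integrable_cong_AE[OF SVm borel_measurable_cond_exp2 B1] sf1.real_cond_exp_int(1)[OF X_int[OF sT]]
    by simp
  have sub1: "subalgebra M (F (Suc n))" using subalg[OF sT] .
  have sub2: "subalgebra (F (Suc n)) (F n)" using subalg2[of n "Suc n"] sT by simp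
  have nestY: "AE \<omega> in M. CE n (Y (Suc n)) \<omega> = CE n (S (Suc n)) \<omega>"
  proof -
    have h1: "AE \<omega> in M. CE n (CE (Suc n) (Y (Suc n))) \<omega> = CE n (Y (Suc n)) \<omega>"
      by (rule sf.real_cond_exp_nested_subalg[OF sub1 sub2 Y_int[OF sT]])
    have h2: "AE \<omega> in M. CE n (S (Suc n)) \<omega> = CE n (CE (Suc n) (Y (Suc n))) \<omega>"
      by (rule sf.real_cond_exp_cong[OF A1 Sm borel_measurable_cond_exp2])
    from h1 h2 show ?thesis by eventually_elim simp
  qed
  have nestX: "AE \<omega> in M. CE n (X (Suc n)) \<omega> = CE n (\<lambda>\<omega>. S (Suc n) \<omega> * V (Suc n) \<omega>) \<omega>"
  proof -
    have h1: "AE \<omega> in M. CE n (CE (Suc n) (X (Suc n))) \<omega> = CE n (X (Suc n)) \<omega>"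
      by (rule sf.real_cond_exp_nested_subalg[OF sub1 sub2 X_int[OF sT]])
    have h2: "AE \<omega> in M. CE n (\<lambda>\<omega>. S (Suc n) \<omega> * V (Suc n) \<omega>) \<omega> = CE n (CE (Suc n) (X (Suc n))) \<omega>"
      by (rule sf.real_cond_exp_cong[OF B1 SVm borel_measurable_cond_exp2])
    from h1 h2 show ?thesis by eventually_elim simp
  qed
  have cp0: "AE \<omega> in M. CE n (indicator (D (Suc n))) \<omega> \<ge> 0"
    by (rule sf.real_cond_exp_pos) (auto intro!: borel_measurable_indicator D_M)
  have S0: "AE \<omega> in M. S (Suc n) \<omega> \<ge> 0"
  proof -
    have "AE \<omega> in M. CE (Suc n) (Y (Suc n)) \<omega> \<ge> 0"
      by (rule sf1.real_cond_exp_pos[OF _ Y1m]) (auto simp: Y_def)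
    with A1 show ?thesis by eventually_elim simp
  qed
  have SA: "AE \<omega> in M. \<omega> \<in> D (Suc n) \<longrightarrow> S (Suc n) \<omega> > 0" using C1 by eventually_elim auto
  have P0: "AE \<omega> in M. CE n (indicator (D (Suc n))) \<omega> > 0 \<longrightarrow> CE n (S (Suc n)) \<omega> > 0"
    by (rule pos_lemma[OF nT intS1 S0 SA D_M])
  have P: "AE \<omega> in M. n < TE \<omega> \<longrightarrow> CE n (S (Suc n)) \<omega> > 0"
    using P0 cp0
  proof eventually_elim
    case (elim \<omega>)
    show ?case
    proof
      assume "n < TE \<omega>"
      then have "CE n (indicator (D (Suc n))) \<omega> \<noteq> 0" unfolding Te_gt cprob_def by auto
      then show "CE n (S (Suc n)) \<omega> > 0" using elim by simp
    qed
  qed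
  have athF: "ath n \<in> borel_measurable (F n)" by (rule ath_meas[OF nT])
  have athF'[measurable]: "(\<lambda>\<omega>. 1 - ath n \<omega>) \<in> borel_measurable (F n)" using athF by measurable
  have athM[measurable]: "ath n \<in> borel_measurable M" using measM[OF nT athF] .
  have DnF[measurable]: "D n \<in> sets (F n)" by (rule D_F[OF nT])
  have [measurable]: "D n \<in> sets M" by (rule D_M)
  have [measurable]: "Y (Suc n) \<in> borel_measurable M" "X (Suc n) \<in> borel_measurable M" using Y1m X1m by auto
  have GF[measurable]: "G n \<in> borel_measurable (F n)" by (rule Gmeas[OF nT])
  have GM[measurable]: "G n \<in> borel_measurable M" using measM[OF nT GF] .
  have athF2[measurable]: "ath n \<in> borel_measurable (F n)" by (rule athF)
  have decY: "AE \<omega> in M. CE n (Y n) \<omega> = ath n \<omega> * indicator (D n) \<omega> + (1 - ath n \<omega>) * CE n (Y (Suc n)) \<omega>"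
  proof -
    have f1F: "(\<lambda>\<omega>. ath n \<omega> * indicator (D n) \<omega>) \<in> borel_measurable (F n)" by measurable
    have if1: "integrable M (\<lambda>\<omega>. ath n \<omega> * indicator (D n) \<omega>)"
      by (rule int_bdd[where B=1]) (rule measM[OF nT f1F], auto simp: indicator_def)
    have if2: "integrable M (\<lambda>\<omega>. (1 - ath n \<omega>) * Y (Suc n) \<omega>)"
      by (rule int_bdd[where B=1]) (rule borel_measurable_times[OF measM[OF nT athF'] Y1m], auto simp: indicator_def Y_def)
    have a: "AE \<omega> in M. CE n (\<lambda>\<omega>. ath n \<omega> * indicator (D n) \<omega> + (1 - ath n \<omega>) * Y (Suc n) \<omega>) \<omega>
        = CE n (\<lambda>\<omega>. ath n \<omega> * indicator (D n) \<omega>) \<omega> + CE n (\<lambda>\<omega>. (1 - ath n \<omega>) * Y (Suc n) \<omega>) \<omega>"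
      by (rule sf.real_cond_exp_add[OF if1 if2])
    have b: "AE \<omega> in M. CE n (\<lambda>\<omega>. ath n \<omega> * indicator (D n) \<omega>) \<omega> = ath n \<omega> * indicator (D n) \<omega>"
      by (rule sf.real_cond_exp_F_meas[OF if1 f1F])
    have c: "AE \<omega> in M. CE n (\<lambda>\<omega>. (1 - ath n \<omega>) * Y (Suc n) \<omega>) \<omega> = (1 - ath n \<omega>) * CE n (Y (Suc n)) \<omega>"
      by (rule sf.real_cond_exp_mult[OF athF' Y1m if2])
    from a b c show ?thesis unfolding XY_step(2)[OF n] by eventually_elim simp
  qed
  have decX: "AE \<omega> in M. CE n (X n) \<omega> = ath n \<omega> * (G n \<omega> * indicator (D n) \<omega>) + (1 - ath n \<omega>) * CE n (X (Suc n)) \<omega>"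
  proof -
    have f1F: "(\<lambda>\<omega>. ath n \<omega> * (G n \<omega> * indicator (D n) \<omega>)) \<in> borel_measurable (F n)" by measurable
    have if1: "integrable M (\<lambda>\<omega>. ath n \<omega> * (G n \<omega> * indicator (D n) \<omega>))"
    proof (rule Bochner_Integration.integrable_bound[OF GD_int[OF nT]])
      show "(\<lambda>\<omega>. ath n \<omega> * (G n \<omega> * indicator (D n) \<omega>)) \<in> borel_measurable M" by measurable
      show "AE \<omega> in M. norm (ath n \<omega> * (G n \<omega> * indicator (D n) \<omega>)) \<le> norm (G n \<omega> * indicator (D n) \<omega>)"
        by (rule AE_I2) (auto simp: abs_mult)
    qed
    have if2: "integrable M (\<lambda>\<omega>. (1 - ath n \<omega>) * X (Suc n) \<omega>)"
    proof (rule Bochner_Integration.integrable_bound[OF X_int[OF sT]])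
      show "(\<lambda>\<omega>. (1 - ath n \<omega>) * X (Suc n) \<omega>) \<in> borel_measurable M" by measurable
      show "AE \<omega> in M. norm ((1 - ath n \<omega>) * X (Suc n) \<omega>) \<le> norm (X (Suc n) \<omega>)"
        by (rule AE_I2) (auto simp: abs_mult)
    qed
    have a: "AE \<omega> in M. CE n (\<lambda>\<omega>. ath n \<omega> * (G n \<omega> * indicator (D n) \<omega>) + (1 - ath n \<omega>) * X (Suc n) \<omega>) \<omega>
        = CE n (\<lambda>\<omega>. ath n \<omega> * (G n \<omega> * indicator (D n) \<omega>)) \<omega> + CE n (\<lambda>\<omega>. (1 - ath n \<omega>) * X (Suc n) \<omega>) \<omega>"
      by (rule sf.real_cond_exp_add[OF if1 if2])
    have b: "AE \<omega> in M. CE n (\<lambda>\<omega>. ath n \<omega> * (G n \<omega> * indicator (D n) \<omega>)) \<omega> = ath n \<omega> * (G n \<omega> * indicator (D n) \<omega>)"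
      by (rule sf.real_cond_exp_F_meas[OF if1 f1F])
    have c: "AE \<omega> in M. CE n (\<lambda>\<omega>. (1 - ath n \<omega>) * X (Suc n) \<omega>) \<omega> = (1 - ath n \<omega>) * CE n (X (Suc n)) \<omega>"
      by (rule sf.real_cond_exp_mult[OF athF' X1m if2])
    from a b c show ?thesis unfolding XY_step(1)[OF n] by eventually_elim simp
  qed
  have A: "AE \<omega> in M. S n \<omega> = CE n (Y n) \<omega>"
    using Te_D[OF n] nestY decY
  proof eventually_elim
    case (elim \<omega>)
    consider "n < TE \<omega>" "G n \<omega> \<ge> J n \<omega>" | "n < TE \<omega>" "\<not> G n \<omega> \<ge> J n \<omega>" | "\<not> n < TE \<omega>" by blast
    then show ?case
    proof cases
      case 1 then show ?thesis using pw(1)[OF n, of \<omega>] elim by (simp add: indicator_def)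
    next
      case 2 then show ?thesis using pw(2)[OF n, of \<omega>] elim by simp
    next
      case 3 then show ?thesis using pw(3)[OF n, of \<omega>] elim by simp
    qed
  qed
  have B: "AE \<omega> in M. S n \<omega> * V n \<omega> = CE n (X n) \<omega>"
    using Te_D[OF n] nestX decX P
  proof eventually_elim
    case (elim \<omega>)
    consider "n < TE \<omega>" "G n \<omega> \<ge> J n \<omega>" | "n < TE \<omega>" "\<not> G n \<omega> \<ge> J n \<omega>" | "\<not> n < TE \<omega>" by blast
    then show ?case
    proof cases
      case 1 then show ?thesis using pw(1)[OF n, of \<omega>] elim by (simp add: indicator_def)
    next
      case 2 then show ?thesis using pw(2)[OF n, of \<omega>] elim by simp
    next
      case 3 then show ?thesis using pw(3)[OF n, of \<omega>] elim by (simp add: mult.commute)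
    qed
  qed
  have C: "AE \<omega> in M. (\<omega> \<in> D n \<or> n < TE \<omega>) \<longrightarrow> S n \<omega> > 0"
    using P
  proof eventually_elim
    case (elim \<omega>)
    consider "n < TE \<omega>" "G n \<omega> \<ge> J n \<omega>" | "n < TE \<omega>" "\<not> G n \<omega> \<ge> J n \<omega>" | "\<not> n < TE \<omega>" by blast
    then show ?case
    proof cases
      case 1 then show ?thesis using pw(1)[OF n, of \<omega>] elim by simp
    next
      case 2 then show ?thesis using pw(2)[OF n, of \<omega>] elim by simp
    next
      case 3 then show ?thesis using pw(3)[OF n, of \<omega>] elim by simp
    qed
  qed
  from A B C show ?case by blast
qed


lemma nest:
  assumes n: "n < T"
  shows "AE \<omega> in M. CE n (Y (Suc n)) \<omega> = CE n (S (Suc n)) \<omega>"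
    and "AE \<omega> in M. CE n (X (Suc n)) \<omega> = CE n (\<lambda>\<omega>. S (Suc n) \<omega> * V (Suc n) \<omega>) \<omega>"
    and "AE \<omega> in M. n < TE \<omega> \<longrightarrow> CE n (S (Suc n)) \<omega> > 0"
proof -
  have nT: "n \<le> T" and sT: "Suc n \<le> T" using n by simp_all
  interpret sf: sigma_finite_subalgebra M "F n" using sfs nT by simp
  interpret sf1: sigma_finite_subalgebra M "F (Suc n)" using sfs sT by simp
  have A1: "AE \<omega> in M. S (Suc n) \<omega> = CE (Suc n) (Y (Suc n)) \<omega>"
    and B1: "AE \<omega> in M. S (Suc n) \<omega> * V (Suc n) \<omega> = CE (Suc n) (X (Suc n)) \<omega>"
    and C1: "AE \<omega> in M. (\<omega> \<in> D (Suc n) \<or> Suc n < TE \<omega>) \<longrightarrow> S (Suc n) \<omega> > 0"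
    using main[OF sT] by auto
  have Sm[measurable]: "S (Suc n) \<in> borel_measurable M" and Vm[measurable]: "V (Suc n) \<in> borel_measurable M"
    using VS_measM[OF sT] by auto
  have SVm: "(\<lambda>\<omega>. S (Suc n) \<omega> * V (Suc n) \<omega>) \<in> borel_measurable M" by measurable
  have Y1m: "Y (Suc n) \<in> borel_measurable M" and X1m: "X (Suc n) \<in> borel_measurable M"
    using XY_meas[OF sT] by auto
  have intS1: "integrable M (S (Suc n))"
    using integrable_cong_AE[OF Sm borel_measurable_cond_exp2 A1] sf1.real_cond_exp_int(1)[OF Y_int[OF sT]]
    by simp
  have sub1: "subalgebra M (F (Suc n))" using subalg[OF sT] .
  have sub2: "subalgebra (F (Suc n)) (F n)" using subalg2[of n "Suc n"] sT by simp
  show "AE \<omega> in M. CE n (Y (Suc n)) \<omega> = CE n (S (Suc n)) \<omega>"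
  proof -
    have h1: "AE \<omega> in M. CE n (CE (Suc n) (Y (Suc n))) \<omega> = CE n (Y (Suc n)) \<omega>"
      by (rule sf.real_cond_exp_nested_subalg[OF sub1 sub2 Y_int[OF sT]])
    have h2: "AE \<omega> in M. CE n (S (Suc n)) \<omega> = CE n (CE (Suc n) (Y (Suc n))) \<omega>"
      by (rule sf.real_cond_exp_cong[OF A1 Sm borel_measurable_cond_exp2])
    from h1 h2 show ?thesis by eventually_elim simp
  qed
  show "AE \<omega> in M. CE n (X (Suc n)) \<omega> = CE n (\<lambda>\<omega>. S (Suc n) \<omega> * V (Suc n) \<omega>) \<omega>"
  proof -
    have h1: "AE \<omega> in M. CE n (CE (Suc n) (X (Suc n))) \<omega> = CE n (X (Suc n)) \<omega>"
      by (rule sf.real_cond_exp_nested_subalg[OF sub1 sub2 X_int[OF sT]])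
    have h2: "AE \<omega> in M. CE n (\<lambda>\<omega>. S (Suc n) \<omega> * V (Suc n) \<omega>) \<omega> = CE n (CE (Suc n) (X (Suc n))) \<omega>"
      by (rule sf.real_cond_exp_cong[OF B1 SVm borel_measurable_cond_exp2])
    from h1 h2 show ?thesis by eventually_elim simp
  qed
  have cp0: "AE \<omega> in M. CE n (indicator (D (Suc n))) \<omega> \<ge> 0"
    by (rule sf.real_cond_exp_pos) (auto intro!: borel_measurable_indicator D_M)
  have S0: "AE \<omega> in M. S (Suc n) \<omega> \<ge> 0"
  proof -
    have "AE \<omega> in M. CE (Suc n) (Y (Suc n)) \<omega> \<ge> 0"
      by (rule sf1.real_cond_exp_pos[OF _ Y1m]) (auto simp: Y_def)
    with A1 show ?thesis by eventually_elim simp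
  qed
  have SA: "AE \<omega> in M. \<omega> \<in> D (Suc n) \<longrightarrow> S (Suc n) \<omega> > 0" using C1 by eventually_elim auto
  have P0: "AE \<omega> in M. CE n (indicator (D (Suc n))) \<omega> > 0 \<longrightarrow> CE n (S (Suc n)) \<omega> > 0"
    by (rule pos_lemma[OF nT intS1 S0 SA D_M])
  show "AE \<omega> in M. n < TE \<omega> \<longrightarrow> CE n (S (Suc n)) \<omega> > 0"
    using P0 cp0
  proof eventually_elim
    case (elim \<omega>)
    show ?case
    proof
      assume "n < TE \<omega>"
      then have "CE n (indicator (D (Suc n))) \<omega> \<noteq> 0" unfolding Te_gt cprob_def by auto
      then show "CE n (S (Suc n)) \<omega> > 0" using elim by simp
    qed
  qed
qed

lemma lhd_enat: "lhd (enat k) s \<longleftrightarrow> enat k < s"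
  unfolding lhd_def by auto

lemma th_integrands:
  assumes t: "t < T"
  shows "(\<lambda>\<omega>'. Gat G (Lop T th t \<omega>') \<omega>' * indicator (survive_set M \<sigma> T th t) \<omega>') = X (Suc t)"
    and "(indicator (survive_set M \<sigma> T th t) :: 'a \<Rightarrow> real) = Y (Suc t)"
proof -
  have ind: "indicator (survive_set M \<sigma> T th t) \<omega> = (indicator (D (tau (Suc t) \<omega>)) \<omega> :: real)" for \<omega>
    unfolding survive_set_def Lop_th[OF t] lhd_enat Dset_def by (simp add: indicator_def)
  show "(\<lambda>\<omega>'. Gat G (Lop T th t \<omega>') \<omega>' * indicator (survive_set M \<sigma> T th t) \<omega>') = X (Suc t)"
    by (rule ext) (simp add: ind Lop_th[OF t] Gat_def X_def)
  show "(indicator (survive_set M \<sigma> T th t) :: 'a \<Rightarrow> real) = Y (Suc t)"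
    by (rule ext) (simp add: ind Y_def)
qed

lemma Jcont_th:
  assumes t: "t < T"
  shows "AE \<omega> in M. Jcont M F \<sigma> G T th t \<omega> = J t \<omega>"
    and "AE \<omega> in M. t < TE \<omega> \<longrightarrow> cprob M F t (survive_set M \<sigma> T th t) \<omega> > 0"
proof -
  have e: "Jcont M F \<sigma> G T th t \<omega> = CE t (X (Suc t)) \<omega> / CE t (Y (Suc t)) \<omega>" for \<omega>
    unfolding Jcont_def cprob_def by (subst th_integrands(1)[OF t], subst th_integrands(2)[OF t], rule refl)
  show "AE \<omega> in M. Jcont M F \<sigma> G T th t \<omega> = J t \<omega>"
    using nest(1,2)[OF t] by eventually_elim (simp add: e)
  show "AE \<omega> in M. t < TE \<omega> \<longrightarrow> cprob M F t (survive_set M \<sigma> T th t) \<omega> > 0"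
    using nest(1,3)[OF t] by eventually_elim (simp add: cprob_def th_integrands[OF t])
qed


lemma existence: "equilibrium_early M F \<sigma> G T th"
proof -
  have adm: "admissible M F \<sigma> T th"
    unfolding admissible_def
  proof (intro conjI allI impI)
    fix t assume t: "t \<le> T"
    show "th t \<in> measurable (F t) (count_space UNIV)" using th_meas[OF t] .
    show "AE \<omega> in M. t < TE \<omega> \<longrightarrow> cprob M F t (survive_set M \<sigma> T th t) \<omega> > 0"
    proof (cases "t < T")
      case True
      then show ?thesis using Jcont_th(2)[OF True] by simp
    next
      case False
      then show ?thesis using Te_le by (intro AE_I2) (metis le_less_trans less_le_not_le t)
    qed
    show "AE \<omega> in M. TE \<omega> \<le> t \<longrightarrow> th t \<omega>"
      by (intro AE_I2 impI th_ge_Te t)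
  qed
  have fp: "AE \<omega> in M. Phi M F \<sigma> G T th t \<omega> = th t \<omega> \<and>
      (t < TE \<omega> \<and> G t \<omega> = Jcont M F \<sigma> G T th t \<omega> \<longrightarrow> th t \<omega>)" if t: "t \<le> T" for t
  proof (cases "t < T")
    case True
    show ?thesis using Jcont_th(1)[OF True]
    proof eventually_elim
      case (elim \<omega>)
      show ?case
      proof (cases "t < TE \<omega>")
        case True2: True
        have "th t \<omega> \<longleftrightarrow> G t \<omega> \<ge> J t \<omega>" using th_step[OF True] True2 by simp
        then show ?thesis using elim True2 unfolding Phi_def by auto
      next
        case False
        then show ?thesis using th_ge_Te[OF t] unfolding Phi_def by simp
      qed
    qed
  next
    case False
    then have "t = T" using t by simp
    show ?thesis
    proof (rule AE_I2)
      fix \<omega>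
      have "\<not> t < TE \<omega>" using Te_le[of \<omega>] \<open>t = T\<close> by simp
      then show "Phi M F \<sigma> G T th t \<omega> = th t \<omega> \<and>
        (t < TE \<omega> \<and> G t \<omega> = Jcont M F \<sigma> G T th t \<omega> \<longrightarrow> th t \<omega>)"
        using th_T[of \<omega>] \<open>t = T\<close> unfolding Phi_def by simp
    qed
  qed
  show ?thesis unfolding equilibrium_early_def equilibrium_def
    using adm fp by (auto elim: AE_mp intro: AE_I2)
qed

lemma Lop_meas:
  assumes th_m: "\<And>s. s \<le> T \<Longrightarrow> Measurable.pred M (\<theta> s)"
  shows "Lop T \<theta> t \<in> measurable M (count_space UNIV)"
proof -
  define Q where "Q s \<omega> = (t < s \<and> s \<le> T \<and> \<theta> s \<omega>)" for s \<omega>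
  have [measurable]: "Measurable.pred M (Q s)" for s
  proof (cases "t < s \<and> s \<le> T")
    case True
    then have "Q s = \<theta> s" unfolding Q_def by auto
    then show ?thesis using th_m True by simp
  next
    case False
    then have "Q s = (\<lambda>_. False)" unfolding Q_def by auto
    then show ?thesis by simp
  qed
  have "Lop T \<theta> t = (\<lambda>\<omega>. if \<exists>s. Q s \<omega> then enat (LEAST s. Q s \<omega>) else \<infinity>)"
    unfolding Lop_def Q_def by simp
  also have "\<dots> \<in> measurable M (count_space UNIV)" by measurable
  finally show ?thesis .
qed

lemma Lop_le: assumes "Lop T \<theta> t \<omega> = enat k" shows "k \<le> T"
proof -
  from assms obtain s where s: "t < s \<and> s \<le> T \<and> \<theta> s \<omega>" and k: "k = (LEAST s. t < s \<and> s \<le> T \<and> \<theta> s \<omega>)"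
    unfolding Lop_def by (auto split: if_splits)
  have "k \<le> s" unfolding k by (rule Least_le) (rule s)
  then show ?thesis using s by simp
qed

lemma integrand_meas:
  assumes th_m: "\<And>s. s \<le> T \<Longrightarrow> Measurable.pred M (\<theta> s)"
  shows "(\<lambda>\<omega>. Gat G (Lop T \<theta> t \<omega>) \<omega> * indicator (survive_set M \<sigma> T \<theta> t) \<omega>) \<in> borel_measurable M"
    and "(indicator (survive_set M \<sigma> T \<theta> t) :: 'a \<Rightarrow> real) \<in> borel_measurable M"
proof -
  have Lm[measurable]: "Lop T \<theta> t \<in> measurable M (count_space UNIV)" by (rule Lop_meas[OF th_m])
  define G' where "G' = (\<lambda>n. if n \<le> T then G n else (\<lambda>_. 0))"
  have [measurable]: "G' n \<in> borel_measurable M" for n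
  proof (cases "n \<le> T")
    case True
    then show ?thesis using measM[OF True Gmeas[OF True]] by (simp add: G'_def)
  qed (simp add: G'_def)
  have eqG: "Gat G (Lop T \<theta> t \<omega>) \<omega> = (case Lop T \<theta> t \<omega> of enat n \<Rightarrow> G' n \<omega> | \<infinity> \<Rightarrow> 0)" for \<omega>
    by (cases "Lop T \<theta> t \<omega>") (auto simp: Gat_def G'_def dest: Lop_le)
  have g1: "(\<lambda>\<omega>. Gat G (Lop T \<theta> t \<omega>) \<omega>) \<in> borel_measurable M"
    unfolding eqG by measurable
  have pl: "(\<lambda>\<omega>. lhd (Lop T \<theta> t \<omega>) (\<sigma> \<omega>)) \<in> measurable M (count_space UNIV)"
  proof (rule measurable_compose_countable[where f="\<lambda>i \<omega>. lhd i (\<sigma> \<omega>)", OF _ Lm])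
    fix i :: enat
    show "(\<lambda>\<omega>. lhd i (\<sigma> \<omega>)) \<in> measurable M (count_space UNIV)"
      by (rule measurable_compose[OF sig_meas]) simp
  qed
  have ss: "survive_set M \<sigma> T \<theta> t \<in> sets M"
    unfolding survive_set_def using pl by (simp add: pred_def)
  show i1: "(indicator (survive_set M \<sigma> T \<theta> t) :: 'a \<Rightarrow> real) \<in> borel_measurable M"
    using ss by simp
  show "(\<lambda>\<omega>. Gat G (Lop T \<theta> t \<omega>) \<omega> * indicator (survive_set M \<sigma> T \<theta> t) \<omega>) \<in> borel_measurable M"
    using g1 i1 by (rule borel_measurable_times)
qed


lemma Jcong:
  assumes tT: "t \<le> T" and th_m: "\<And>s. s \<le> T \<Longrightarrow> Measurable.pred M (\<theta> s)"
    and eq: "\<And>s. t < s \<Longrightarrow> s \<le> T \<Longrightarrow> AE \<omega> in M. \<theta> s \<omega> = th s \<omega>"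
  shows "AE \<omega> in M. Jcont M F \<sigma> G T \<theta> t \<omega> = Jcont M F \<sigma> G T th t \<omega>"
proof -
  interpret sf: sigma_finite_subalgebra M "F t" using sfs tT by simp
  have th_m': "Measurable.pred M (th s)" if "s \<le> T" for s using measM[OF that th_meas[OF that]] .
  have "AE \<omega> in M. \<forall>s\<in>{t<..T}. \<theta> s \<omega> = th s \<omega>" by (rule AE_finite_allI) (auto intro: eq)
  then have L: "AE \<omega> in M. Lop T \<theta> t \<omega> = Lop T th t \<omega>"
  proof eventually_elim
    case (elim \<omega>)
    have e: "(\<lambda>s. t < s \<and> s \<le> T \<and> \<theta> s \<omega>) = (\<lambda>s. t < s \<and> s \<le> T \<and> th s \<omega>)"
      using elim by (auto simp: fun_eq_iff)
    show ?case unfolding Lop_def by (simp only: e)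
  qed
  have I1: "AE \<omega> in M. (indicator (survive_set M \<sigma> T \<theta> t) \<omega> :: real) = indicator (survive_set M \<sigma> T th t) \<omega>"
    using L by eventually_elim (simp add: survive_set_def indicator_def)
  have I2: "AE \<omega> in M. Gat G (Lop T \<theta> t \<omega>) \<omega> * indicator (survive_set M \<sigma> T \<theta> t) \<omega>
       = Gat G (Lop T th t \<omega>) \<omega> * indicator (survive_set M \<sigma> T th t) \<omega>"
    using L I1 by eventually_elim simp
  have c1: "AE \<omega> in M. CE t (\<lambda>\<omega>. Gat G (Lop T \<theta> t \<omega>) \<omega> * indicator (survive_set M \<sigma> T \<theta> t) \<omega>) \<omega>
       = CE t (\<lambda>\<omega>. Gat G (Lop T th t \<omega>) \<omega> * indicator (survive_set M \<sigma> T th t) \<omega>) \<omega>"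
    by (rule sf.real_cond_exp_cong[OF I2 integrand_meas(1)[OF th_m] integrand_meas(1)[OF th_m']])
  have c2: "AE \<omega> in M. CE t (indicator (survive_set M \<sigma> T \<theta> t)) \<omega> = CE t (indicator (survive_set M \<sigma> T th t)) \<omega>"
    by (rule sf.real_cond_exp_cong[OF I1 integrand_meas(2)[OF th_m] integrand_meas(2)[OF th_m']])
  from c1 c2 show ?thesis by eventually_elim (simp add: Jcont_def cprob_def)
qed

lemma uniq:
  assumes eqm: "equilibrium_early M F \<sigma> G T \<theta>" and tT: "t \<le> T"
  shows "AE \<omega> in M. \<theta> t \<omega> = th t \<omega>"
proof -
  have adm: "admissible M F \<sigma> T \<theta>" and fp: "\<And>t. t \<le> T \<Longrightarrow> AE \<omega> in M. Phi M F \<sigma> G T \<theta> t \<omega> = \<theta> t \<omega>"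
    and early: "\<And>t. t \<le> T \<Longrightarrow> AE \<omega> in M. t < TE \<omega> \<and> G t \<omega> = Jcont M F \<sigma> G T \<theta> t \<omega> \<longrightarrow> \<theta> t \<omega>"
    using eqm unfolding equilibrium_early_def equilibrium_def by auto
  have th_m: "Measurable.pred M (\<theta> s)" if "s \<le> T" for s
    using adm that unfolding admissible_def by (auto intro: measM)
  have "\<forall>s. t \<le> s \<longrightarrow> s \<le> T \<longrightarrow> (AE \<omega> in M. \<theta> s \<omega> = th s \<omega>)"
    using tT
  proof (induction rule: inc_induct)
    case base
    show ?case
    proof (intro allI impI)
      fix s assume "T \<le> s" "s \<le> T"
      then have s: "s = T" by simp
      show "AE \<omega> in M. \<theta> s \<omega> = th s \<omega>"
        using fp[OF order_refl]
      proof eventually_elim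
        case (elim \<omega>)
        have "\<not> T < TE \<omega>" using Te_le[of \<omega>] by simp
        then show ?case using elim th_T[of \<omega>] s unfolding Phi_def by simp
      qed
    qed
  next
    case (step n)
    have n: "n < T" using step.hyps by simp
    have nT: "n \<le> T" using n by simp
    have IH: "\<And>s. n < s \<Longrightarrow> s \<le> T \<Longrightarrow> AE \<omega> in M. \<theta> s \<omega> = th s \<omega>"
      using step.IH by (auto simp: Suc_le_eq)
    have Jc: "AE \<omega> in M. Jcont M F \<sigma> G T \<theta> n \<omega> = Jcont M F \<sigma> G T th n \<omega>"
      by (rule Jcong[OF nT th_m IH]) auto
    have cur: "AE \<omega> in M. \<theta> n \<omega> = th n \<omega>"
      using Jc Jcont_th(1)[OF n] fp[OF nT] early[OF nT]
    proof eventually_elim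
      case (elim \<omega>)
      show ?case
      proof (cases "n < TE \<omega>")
        case True
        have "th n \<omega> \<longleftrightarrow> G n \<omega> \<ge> J n \<omega>" using th_step[OF n] True by simp
        moreover have "\<theta> n \<omega> \<longleftrightarrow> G n \<omega> \<ge> Jcont M F \<sigma> G T \<theta> n \<omega>"
          using elim True unfolding Phi_def by (auto split: if_splits)
        ultimately show ?thesis using elim by simp
      next
        case False
        then show ?thesis using elim th_ge_Te[OF nT] unfolding Phi_def by simp
      qed
    qed
    show ?case
    proof (intro allI impI)
      fix s assume "n \<le> s" "s \<le> T"
      then show "AE \<omega> in M. \<theta> s \<omega> = th s \<omega>"
        using cur IH by (cases "s = n") auto
    qed
  qed
  then show ?thesis using tT by simp
qed

end

theorem theorem3p1:
  fixes M :: "'a measure" and F :: "nat \<Rightarrow> 'a measure" and \<sigma> :: "'a \<Rightarrow> enat"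
    and G :: "nat \<Rightarrow> 'a \<Rightarrow> real" and T :: nat
  assumes "prob_space M"
    and "\<forall>t\<le>T. subalgebra M (F t)"
    and "\<forall>s t. s \<le> t \<and> t \<le> T \<longrightarrow> sets (F s) \<subseteq> sets (F t)"
    and "sets (F 0) = {{}, space M}"
    and "\<sigma> \<in> measurable M (count_space UNIV)"
    and "\<forall>t\<le>T. {\<omega> \<in> space M. \<sigma> \<omega> \<le> enat t} \<in> sets (F t)"
    and "AE \<omega> in M. 0 < \<sigma> \<omega>"
    and "\<forall>t\<le>T. G t \<in> borel_measurable (F t)"
    and "integrable M (\<lambda>\<omega>. Max ((\<lambda>t. \<bar>G t \<omega>\<bar> * indicator (Dset M \<sigma> t) \<omega>) ` {..T}))"
  shows "equilibrium_early M F \<sigma> G T (\<lambda>t \<omega>. G t \<omega> \<ge> Vproc M F \<sigma> G T t \<omega>)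
    \<and> (\<forall>\<theta>. equilibrium_early M F \<sigma> G T \<theta> \<longrightarrow>
          (\<forall>t\<le>T. AE \<omega> in M. \<theta> t \<omega> = (G t \<omega> \<ge> Vproc M F \<sigma> G T t \<omega>)))"
proof -
  interpret stsetup M F \<sigma> G T
  proof (rule stsetup.intro)
    show "prob_space M" by (rule assms(1))
    show "stsetup_axioms M F \<sigma> G T"
      by (rule stsetup_axioms.intro) (use assms in auto)
  qed
  show ?thesis using existence uniq by blast
qed

end
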